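(* For each $\theta\in C_h$ there exist exactly two primitive Eisenstein triples, of the form $(a,b,c)$ and $(b-a,b,c)$, such that $$\cos\theta = \frac{|b-2a|}{2c} = \frac{|b-2(b-a)|}{2c}.$$ Conversely, for each primitive Eisenstein triple $(a,b,c)$ there exists a unique $\theta\in C_h$ (hence a unique similarity class $C_h(\theta)$) satisfying this equation.
   Context: $\Lambda_h = \begin{bmatrix} 1 & -1/2 \\ 0 & \sqrt3/2\end{bmatrix}\mathbb{Z}^2$. A full-rank lattice $\Gamma\subset\mathbb{R}^2$ is well-rounded (WR) if it has a basis of vectors of minimal nonzero norm; such a basis can be chosen with angle in $[\pi/3,\pi/2]$ between its vectors, and this angle $\theta(\Gamma)$ is an invariant of $\Gamma$. $\mathrm{WR}(\Lambda_h)$ is the set of full-rank WR sublattices of $\Lambda_h$; $C_h = \{\theta\in[\pi/3,\pi/2] : \theta=\theta(\Gamma)\text{ for some }\Gamma\in\mathrm{WR}(\Lambda_h)\}$ and $C_h(\theta)=\{\Omega\in\mathrm{WR}(\Lambda_h):\theta(\Omega)=\theta\}$. An Eisenstein triple is $(a,b,c)\in\mathbb{Z}^3_{\ge0}\setminus\{0\}$ with $a^2-ab+b^2=c^2$; it is primitive if $a\le b$ and $\gcd(a,b,c)=1$. *)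

theory Defs
  imports "HOL-Analysis.Analysis"
begin

text \<open>We identify \<open>\<real>\<^sup>2\<close> with \<open>\<complex>\<close> (as a real inner product space:
  \<open>x \<bullet> y = Re (x * cnj y)\<close>).\<close>

definition omega_h :: complex where
  "omega_h = Complex (-1/2) (sqrt 3 / 2)"

definition Lambda_h :: "complex set" where
  "Lambda_h = {of_int m + of_int n * omega_h | m n :: int. True}"

definition lat_gen :: "complex \<Rightarrow> complex \<Rightarrow> complex set" where
  "lat_gen u v = {of_int m * u + of_int n * v | m n :: int. True}"

definition lin_indep2 :: "complex \<Rightarrow> complex \<Rightarrow> bool" where
  "lin_indep2 u v \<longleftrightarrow> (\<forall>r s :: real. r *\<^sub>R u + s *\<^sub>R v = 0 \<longrightarrow> r = 0 \<and> s = 0)"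

definition is_basis :: "complex set \<Rightarrow> complex \<Rightarrow> complex \<Rightarrow> bool" where
  "is_basis \<Gamma> u v \<longleftrightarrow> lin_indep2 u v \<and> \<Gamma> = lat_gen u v"

definition full_rank_sublattice :: "complex set \<Rightarrow> bool" where
  "full_rank_sublattice \<Gamma> \<longleftrightarrow> \<Gamma> \<subseteq> Lambda_h \<and> (\<exists>u v. is_basis \<Gamma> u v)"

definition minimal_vec :: "complex set \<Rightarrow> complex \<Rightarrow> bool" where
  "minimal_vec \<Gamma> x \<longleftrightarrow> x \<in> \<Gamma> \<and> x \<noteq> 0 \<and> (\<forall>y\<in>\<Gamma>. y \<noteq> 0 \<longrightarrow> norm x \<le> norm y)"

definition minimal_basis :: "complex set \<Rightarrow> complex \<Rightarrow> complex \<Rightarrow> bool" where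
  "minimal_basis \<Gamma> u v \<longleftrightarrow> is_basis \<Gamma> u v \<and> minimal_vec \<Gamma> u \<and> minimal_vec \<Gamma> v"

definition well_rounded :: "complex set \<Rightarrow> bool" where
  "well_rounded \<Gamma> \<longleftrightarrow> (\<exists>u v. minimal_basis \<Gamma> u v)"

definition WR_h :: "complex set set" where
  "WR_h = {\<Gamma>. full_rank_sublattice \<Gamma> \<and> well_rounded \<Gamma>}"

definition vec_angle :: "complex \<Rightarrow> complex \<Rightarrow> real" where
  "vec_angle u v = arccos ((u \<bullet> v) / (norm u * norm v))"

definition WR_angle :: "complex set \<Rightarrow> real \<Rightarrow> bool" where
  "WR_angle \<Gamma> \<theta> \<longleftrightarrow> pi/3 \<le> \<theta> \<and> \<theta> \<le> pi/2 \<and>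
     (\<exists>u v. minimal_basis \<Gamma> u v \<and> vec_angle u v = \<theta>)"

definition C_h :: "real set" where
  "C_h = {\<theta>. \<exists>\<Gamma>\<in>WR_h. WR_angle \<Gamma> \<theta>}"

definition eisenstein_triple :: "nat \<times> nat \<times> nat \<Rightarrow> bool" where
  "eisenstein_triple t = (case t of (a, b, c) \<Rightarrow>
     (a, b, c) \<noteq> (0, 0, 0) \<and>
     int a ^ 2 - int a * int b + int b ^ 2 = int c ^ 2)"

definition primitive_eisenstein_triple :: "nat \<times> nat \<times> nat \<Rightarrow> bool" where
  "primitive_eisenstein_triple t = (case t of (a, b, c) \<Rightarrow>
     eisenstein_triple (a, b, c) \<and> a \<le> b \<and> gcd (gcd a b) c = 1)"

definition cos_ratio :: "nat \<times> nat \<times> nat \<Rightarrow> real" where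
  "cos_ratio t = (case t of (a, b, c) \<Rightarrow> \<bar>real b - 2 * real a\<bar> / (2 * real c))"

end

theory Submission
  imports Defs
begin

lemma prim_basic:
  assumes "primitive_eisenstein_triple (a,b,c)"
  shows "a \<le> b" "gcd (gcd a b) c = 1"
    "int a ^ 2 - int a * int b + int b ^ 2 = int c ^ 2"
    "(int b - 2 * int a)^2 + 3 * int b ^ 2 = 4 * int c ^ 2"
    "c > 0" "b > 0"
proof -
  show ab: "a \<le> b" and "gcd (gcd a b) c = 1"
    and eq: "int a ^ 2 - int a * int b + int b ^ 2 = int c ^ 2"
    using assms by (auto simp: primitive_eisenstein_triple_def eisenstein_triple_def)
  show eq2: "(int b - 2 * int a)^2 + 3 * int b ^ 2 = 4 * int c ^ 2"
    using eq by (simp add: power2_eq_square algebra_simps)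
  have nz: "(a,b,c) \<noteq> (0,0,0)"
    using assms by (auto simp: primitive_eisenstein_triple_def eisenstein_triple_def)
  show "b > 0"
  proof (rule ccontr)
    assume "\<not> b > 0" then have "b = 0" by simp
    with ab have "a = 0" by simp
    with \<open>b = 0\<close> eq have "c = 0" by simp
    with \<open>a=0\<close> \<open>b=0\<close> nz show False by simp
  qed
  then show "c > 0"
  proof -
    have "int c ^ 2 > 0"
    proof -
      have "(int b - 2 * int a)^2 \<ge> 0" by simp
      moreover have "3 * int b ^ 2 > 0" using \<open>b > 0\<close> by simp
      ultimately show ?thesis using eq2 by linarith
    qed
    then show ?thesis by (cases c) auto
  qed
qed

lemma prim_swap:
  assumes "primitive_eisenstein_triple (a,b,c)"
  shows "primitive_eisenstein_triple (b-a,b,c)" "cos_ratio (b-a,b,c) = cos_ratio (a,b,c)"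
proof -
  have ab: "a \<le> b" and g: "gcd (gcd a b) c = 1"
    and eq: "int a ^ 2 - int a * int b + int b ^ 2 = int c ^ 2" "b > 0"
    using prim_basic[OF assms] by auto
  have ia: "int (b - a) = int b - int a" using ab by simp
  have "(int b - int a)^2 - (int b - int a)*int b + int b^2 = int a^2 - int a * int b + int b^2"
    by (simp add: power2_eq_square algebra_simps)
  then have eq': "int (b-a) ^ 2 - int (b-a) * int b + int b ^ 2 = int c ^ 2"
    unfolding ia using eq(1) by (rule trans)
  have "gcd (b - a) b = gcd a b"
    using ab by (rule gcd_diff2_nat)
  then show "primitive_eisenstein_triple (b-a,b,c)"
    using eq' g \<open>b>0\<close> by (auto simp: primitive_eisenstein_triple_def eisenstein_triple_def)
  have "real (b - a) = real b - real a" using ab by simp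
  then show "cos_ratio (b-a,b,c) = cos_ratio (a,b,c)"
    by (simp add: cos_ratio_def abs_minus_commute)
qed

lemma prim_neq:
  assumes "primitive_eisenstein_triple (a,b,c)"
  shows "b \<noteq> 2 * a"
proof
  assume b: "b = 2 * a"
  have eq: "int a ^ 2 - int a * int b + int b ^ 2 = int c ^ 2" and g: "gcd (gcd a b) c = 1"
    using prim_basic[OF assms] by auto
  then have "int a ^ 2 - int a * (2 * int a) + (2 * int a)^2 = int c^2" using b by simp
  then have "int (3 * a^2) = int (c^2)" by (simp add: power2_eq_square algebra_simps)
  then have "3 * a^2 = c^2" by (simp only: of_nat_eq_iff)
  then have "3 dvd c^2" by (metis dvd_triv_left)
  then have "3 dvd c" using prime_dvd_power_nat[of 3 c 2] by simp
  then obtain d where d: "c = 3 * d" by blast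
  then have "a^2 = 3 * d^2" using \<open>3 * a^2 = c^2\<close> by (simp add: power2_eq_square)
  then have "3 dvd a^2" by simp
  then have "3 dvd a" using prime_dvd_power_nat[of 3 a 2] by simp
  then have "3 dvd gcd (gcd a b) c" using b d by simp
  with g show False by simp
qed

lemma gcd3_mult: "gcd (gcd (k*a) (k*b)) (k*c) = k * gcd (gcd a b) (c::nat)"
  by (simp add: gcd_mult_distrib_nat)

lemma prim_prop_eq:
  assumes p1: "primitive_eisenstein_triple (a1,b1,c1)"
    and p2: "primitive_eisenstein_triple (a2,b2,c2)"
    and h1: "(int b1 - 2*int a1) * int c2 = (int b2 - 2*int a2) * int c1"
    and h2: "b1 * c2 = b2 * c1"
  shows "(a1,b1,c1) = (a2,b2,c2)"
proof -
  have hb: "int b1 * int c2 = int b2 * int c1" using h2 by (metis of_nat_mult)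
  have "int b1 * int c2 - 2 * (int a1 * int c2) = int b2 * int c1 - 2 * (int a2 * int c1)"
    using h1 by (simp add: algebra_simps)
  with hb have "int a1 * int c2 = int a2 * int c1" by linarith
  then have h3: "a1 * c2 = a2 * c1" by (metis of_nat_eq_iff of_nat_mult)
  have g1: "gcd (gcd a1 b1) c1 = 1" and g2: "gcd (gcd a2 b2) c2 = 1"
    and c1: "c1 > 0" and c2: "c2 > 0"
    using prim_basic[OF p1] prim_basic[OF p2] by auto
  have "c1 dvd c2*a1" using h3 by (simp add: mult.commute)
  moreover have "c1 dvd c2*b1" using h2 by (simp add: mult.commute)
  moreover have "c1 dvd c2*c1" by simp
  ultimately have "c1 dvd gcd (gcd (c2*a1) (c2*b1)) (c2*c1)" by (simp add: gcd_greatest)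
  also have "gcd (gcd (c2*a1) (c2*b1)) (c2*c1) = c2" unfolding gcd3_mult g1 by simp
  finally have d1: "c1 dvd c2" .
  have "c2 dvd c1*a2" using h3 by (metis dvd_triv_right mult.commute)
  moreover have "c2 dvd c1*b2" using h2 by (metis dvd_triv_right mult.commute)
  moreover have "c2 dvd c1*c2" by simp
  ultimately have "c2 dvd gcd (gcd (c1*a2) (c1*b2)) (c1*c2)" by (simp add: gcd_greatest)
  also have "gcd (gcd (c1*a2) (c1*b2)) (c1*c2) = c1" unfolding gcd3_mult g2 by simp
  finally have "c2 dvd c1" .
  with d1 have "c1 = c2" by (simp add: dvd_antisym)
  with h2 h3 c1 show ?thesis by simp
qed

lemma prim_uniq:
  assumes p1: "primitive_eisenstein_triple (a1,b1,c1)"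
    and p2: "primitive_eisenstein_triple (a2,b2,c2)"
    and r: "cos_ratio (a1,b1,c1) = cos_ratio (a2,b2,c2)"
  shows "(a2,b2,c2) = (a1,b1,c1) \<or> (a2,b2,c2) = (b1-a1,b1,c1)"
proof -
  have e1: "(int b1 - 2 * int a1)^2 + 3 * int b1 ^ 2 = 4 * int c1 ^ 2" and c1: "c1 > 0"
    and e2: "(int b2 - 2 * int a2)^2 + 3 * int b2 ^ 2 = 4 * int c2 ^ 2" and c2: "c2 > 0"
    using prim_basic[OF p1] prim_basic[OF p2] by auto
  define x1 where "x1 = int b1 - 2 * int a1"
  define x2 where "x2 = int b2 - 2 * int a2"
  have "\<bar>real b1 - 2 * real a1\<bar> / (2 * real c1) = \<bar>real b2 - 2 * real a2\<bar> / (2 * real c2)"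
    using r by (simp add: cos_ratio_def)
  then have "\<bar>real b1 - 2 * real a1\<bar> * real c2 = \<bar>real b2 - 2 * real a2\<bar> * real c1"
    using c1 c2 by (simp add: field_simps)
  then have "real_of_int (\<bar>x1\<bar> * int c2) = real_of_int (\<bar>x2\<bar> * int c1)"
    by (simp add: x1_def x2_def)
  then have ax: "\<bar>x1\<bar> * int c2 = \<bar>x2\<bar> * int c1" by (simp only: of_int_eq_iff)
  have "3 * (int b1 * int c2)^2 = 3 * (int b2 * int c1)^2"
  proof -
    have t1: "3 * int b1^2 = 4 * int c1 ^ 2 - x1^2" using e1 x1_def by simp
    have "3 * (int b1 * int c2)^2 = (3 * int b1^2) * int c2 ^ 2" by (simp add: power_mult_distrib)
    also have "\<dots> = (4 * int c1 ^ 2 - x1^2) * int c2 ^ 2" using t1 by simp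
    also have "\<dots> = 4 * int c1 ^ 2 * int c2^2 - (\<bar>x1\<bar> * int c2)^2"
      by (simp add: power_mult_distrib algebra_simps)
    also have "\<dots> = 4 * int c1 ^ 2 * int c2^2 - (\<bar>x2\<bar> * int c1)^2" using ax by simp
    also have "\<dots> = (4 * int c2 ^ 2 - x2^2) * int c1 ^ 2"
      by (simp add: power_mult_distrib algebra_simps)
    also have "\<dots> = (3 * int b2^2) * int c1 ^ 2" using e2 x2_def by simp
    also have "\<dots> = 3 * (int b2 * int c1)^2" by (simp add: power_mult_distrib)
    finally show ?thesis .
  qed
  then have "(int b1 * int c2)^2 = (int b2 * int c1)^2" by simp
  then have "int b1 * int c2 = int b2 * int c1"
    by (simp add: power2_eq_iff_nonneg)
  then have hb: "b1 * c2 = b2 * c1" by (metis of_nat_eq_iff of_nat_mult)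
  have sx: "x1 * int c2 = x2 * int c1 \<or> - x1 * int c2 = x2 * int c1"
  proof (cases "x1 \<ge> 0")
    case True
    then have t1: "\<bar>x1\<bar> = x1" by simp
    show ?thesis
    proof (cases "x2 \<ge> 0")
      case True
      then have "\<bar>x2\<bar> = x2" by simp
      with ax t1 have "x1 * int c2 = x2 * int c1" by (simp only:)
      then show ?thesis ..
    next
      case False
      then have "\<bar>x2\<bar> = - x2" by simp
      with ax t1 have "x1 * int c2 = - (x2 * int c1)" by (simp only: minus_mult_left)
      then have "- x1 * int c2 = x2 * int c1" by (simp only: minus_mult_left minus_minus)
      then show ?thesis ..
    qed
  next
    case False
    then have t1: "\<bar>x1\<bar> = -x1" by simp
    show ?thesis
    proof (cases "x2 \<ge> 0")
      case True
      then have "\<bar>x2\<bar> = x2" by simp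
      with ax t1 have "- x1 * int c2 = x2 * int c1" by (simp only:)
      then show ?thesis ..
    next
      case False
      then have "\<bar>x2\<bar> = - x2" by simp
      with ax t1 have "- x1 * int c2 = - x2 * int c1" by (simp only:)
      then have "x1 * int c2 = x2 * int c1" by (simp only: minus_mult_left neg_equal_iff_equal)
      then show ?thesis ..
    qed
  qed
  then show ?thesis
  proof
    assume "x1 * int c2 = x2 * int c1"
    then have "(a1,b1,c1) = (a2,b2,c2)"
      by (intro prim_prop_eq[OF p1 p2 _ hb]) (simp add: x1_def x2_def)
    then show ?thesis by (intro disjI1) (rule sym)
  next
    assume h: "- x1 * int c2 = x2 * int c1"
    have "int (b1 - a1) = int b1 - int a1" using prim_basic(1)[OF p1] by simp
    then have "int b1 - 2 * int (b1 - a1) = - x1" by (simp add: x1_def)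
    then have "(b1-a1,b1,c1) = (a2,b2,c2)"
      by (intro prim_prop_eq[OF prim_swap(1)[OF p1] p2 _ hb]) (use h in \<open>simp add: x2_def\<close>)
    then show ?thesis by (intro disjI2) (rule sym)
  qed
qed

lemma prim_range:
  assumes p: "primitive_eisenstein_triple (a,b,c)"
  shows "0 < cos_ratio (a,b,c)" "cos_ratio (a,b,c) \<le> 1/2"
proof -
  have ab: "a \<le> b" and c: "c > 0" and e: "(int b - 2 * int a)^2 + 3 * int b ^ 2 = 4 * int c ^ 2"
    using prim_basic[OF p] by auto
  have "b \<noteq> 2 * a" using prim_neq[OF p] .
  then have "real b \<noteq> real (2 * a)" by simp
  then have "real b - 2 * real a \<noteq> 0" by simp
  then show "0 < cos_ratio (a,b,c)" using c by (simp add: cos_ratio_def)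
  have h: "\<bar>int b - 2 * int a\<bar> \<le> int b" using ab by simp
  have "\<bar>int b - 2 * int a\<bar>^2 \<le> int b ^ 2"
    by (rule power_mono[OF h]) simp
  then have "(int b - 2 * int a)^2 \<le> int b ^ 2" by simp
  then have "\<bar>int b - 2 * int a\<bar>^2 \<le> int c ^ 2" using e by simp
  then have "\<bar>int b - 2 * int a\<bar> \<le> int c"
    by (rule power2_le_imp_le) simp
  then have "real_of_int \<bar>int b - 2 * int a\<bar> \<le> real_of_int (int c)"
    by (simp only: of_int_le_iff)
  then have "\<bar>real b - 2 * real a\<bar> \<le> real c" by simp
  then show "cos_ratio (a,b,c) \<le> 1/2" using c by (simp add: cos_ratio_def field_simps)
qed

lemma prim_exists:
  assumes ab: "a \<le> b" and nz: "c > 0"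
    and eq: "int a ^ 2 - int a * int b + int b ^ 2 = int c ^ 2"
  shows "\<exists>t. primitive_eisenstein_triple t \<and> cos_ratio t = cos_ratio (a,b,c)"
proof -
  define g where "g = gcd (gcd a b) c"
  have gpos: "g > 0" using nz by (simp add: g_def)
  have "g dvd a" unfolding g_def by (meson dvd_trans gcd_dvd1)
  then obtain a' where a': "a = g * a'" by (elim dvdE)
  have "g dvd b" unfolding g_def by (meson dvd_trans gcd_dvd1 gcd_dvd2)
  then obtain b' where b': "b = g * b'" by (elim dvdE)
  have "g dvd c" unfolding g_def by (meson gcd_dvd2)
  then obtain c' where c': "c = g * c'" by (elim dvdE)
  have "g = g * gcd (gcd a' b') c'" using g_def unfolding a' b' c' gcd3_mult .
  then have g1: "gcd (gcd a' b') c' = 1" using gpos by simp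
  have H1: "int a ^ 2 - int a * int b + int b ^ 2 = (int g)^2 * (int a' ^ 2 - int a' * int b' + int b' ^ 2)"
    unfolding a' b' of_nat_mult by (simp add: power2_eq_square algebra_simps)
  have H2: "int c ^ 2 = (int g)^2 * int c' ^ 2" unfolding c' of_nat_mult by (simp add: power_mult_distrib)
  have "(int g)^2 * (int a' ^ 2 - int a' * int b' + int b' ^ 2) = int a ^ 2 - int a * int b + int b ^ 2"
    using H1 by (rule sym)
  also have "\<dots> = int c ^ 2" by (rule eq)
  also have "\<dots> = (int g)^2 * int c' ^ 2" by (rule H2)
  finally have "(int g)^2 * (int a' ^ 2 - int a' * int b' + int b' ^ 2) = (int g)^2 * int c' ^ 2" .
  moreover have nz2: "(int g)^2 \<noteq> 0" using gpos by simp
  ultimately have eq': "int a' ^ 2 - int a' * int b' + int b' ^ 2 = int c' ^ 2"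
    by (simp only: mult_left_cancel[OF nz2])
  have "a' \<le> b'" using ab a' b' gpos by simp
  moreover have "c' > 0" using nz c' by simp
  ultimately have "primitive_eisenstein_triple (a',b',c')"
    using eq' g1 by (auto simp: primitive_eisenstein_triple_def eisenstein_triple_def)
  moreover have "cos_ratio (a',b',c') = cos_ratio (a,b,c)"
  proof -
    have "real b - 2 * real a = real g * (real b' - 2 * real a')"
      using a' b' by (simp add: algebra_simps)
    then have "\<bar>real b - 2 * real a\<bar> = real g * \<bar>real b' - 2 * real a'\<bar>"
      by (simp add: abs_mult)
    then show ?thesis using gpos c' by (simp add: cos_ratio_def)
  qed
  ultimately show ?thesis by blast
qed


lemma sqrt3_sq: "sqrt 3 * sqrt 3 = (3::real)" by simp

lemma lh_Re: "Re (of_int m + of_int n * omega_h) = real_of_int m - real_of_int n / 2"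
  by (simp add: omega_h_def)
lemma lh_Im: "Im (of_int m + of_int n * omega_h) = real_of_int n * sqrt 3 / 2"
  by (simp add: omega_h_def)

lemma lh_norm2: "(cmod (of_int m + of_int n * omega_h))^2 = real_of_int (m^2 - m*n + n^2)"
  unfolding cmod_power2 lh_Re lh_Im
  by (simp add: power2_eq_square field_simps)

lemma lh_inner: "(of_int m1 + of_int n1 * omega_h) \<bullet> (of_int m2 + of_int n2 * omega_h)
   = real_of_int (2*m1*m2 + 2*n1*n2 - m1*n2 - m2*n1) / 2"
  unfolding inner_complex_def lh_Re lh_Im
  by (simp add: power2_eq_square field_simps)

lemma int_form_pos:
  fixes p q :: int
  assumes "(p,q) \<noteq> (0,0)"
  shows "p^2 - \<bar>p*q\<bar> + q^2 \<ge> 1"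
proof -
  have "p^2 - \<bar>p*q\<bar> + q^2 = (\<bar>p\<bar> - \<bar>q\<bar>)^2 + \<bar>p\<bar>*\<bar>q\<bar>"
    by (simp add: power2_eq_square abs_mult algebra_simps)
  moreover have "(\<bar>p\<bar> - \<bar>q\<bar>)^2 + \<bar>p\<bar>*\<bar>q\<bar> \<ge> 1"
  proof (cases "\<bar>p\<bar> = \<bar>q\<bar>")
    case True
    then have "\<bar>p\<bar> \<ge> 1" using assms by auto
    then have "1 * 1 \<le> \<bar>p\<bar>*\<bar>p\<bar>" by (intro mult_mono) auto
    then have "\<bar>p\<bar>*\<bar>q\<bar> \<ge> 1" using True by simp
    then show ?thesis using zero_le_power2[of "\<bar>p\<bar> - \<bar>q\<bar>"] by linarith
  next
    case False
    then have "\<bar>\<bar>p\<bar> - \<bar>q\<bar>\<bar> \<ge> 1" by linarith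
    then have "\<bar>\<bar>p\<bar> - \<bar>q\<bar>\<bar>^2 \<ge> 1" using one_le_power by blast
    then have "(\<bar>p\<bar> - \<bar>q\<bar>)^2 \<ge> 1" by simp
    moreover have "\<bar>p\<bar>*\<bar>q\<bar> \<ge> 0" by simp
    ultimately show ?thesis by linarith
  qed
  ultimately show ?thesis by simp
qed

lemma norm2_comb:
  "(cmod (of_int p * u + of_int q * v))^2
     = real_of_int p ^2 * (cmod u)^2 + 2 * real_of_int p * real_of_int q * (u \<bullet> v) + real_of_int q^2 * (cmod v)^2"
  unfolding cmod_power2 inner_complex_def
  by (simp add: power2_eq_square algebra_simps)

lemma min_lemma:
  assumes nuv: "cmod u = cmod v" and iuv: "\<bar>u \<bullet> v\<bar> \<le> (cmod u)^2 / 2"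
    and pq: "(p,q) \<noteq> (0,0)"
  shows "cmod u \<le> cmod (of_int p * u + of_int q * v)"
proof -
  define s where "s = (cmod u)^2"
  have s0: "s \<ge> 0" by (simp add: s_def)
  have f: "real_of_int (p^2 - \<bar>p*q\<bar> + q^2) \<ge> 1" using int_form_pos[OF pq] by linarith
  have "2 * real_of_int p * real_of_int q * (u \<bullet> v) \<ge> - (\<bar>real_of_int p * real_of_int q\<bar> * s)"
  proof -
    have "\<bar>2 * real_of_int p * real_of_int q * (u \<bullet> v)\<bar> = 2 * \<bar>real_of_int p * real_of_int q\<bar> * \<bar>u \<bullet> v\<bar>"
      by (simp add: abs_mult)
    also have "\<dots> \<le> 2 * \<bar>real_of_int p * real_of_int q\<bar> * (s/2)"
      using iuv s_def by (intro mult_left_mono) auto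
    finally show ?thesis by linarith
  qed
  then have "(cmod (of_int p * u + of_int q * v))^2 \<ge> s * real_of_int (p^2 - \<bar>p*q\<bar> + q^2)"
    unfolding norm2_comb using nuv s_def by (simp add: algebra_simps abs_mult)
  moreover have "s * real_of_int (p^2 - \<bar>p*q\<bar> + q^2) \<ge> s"
    using f s0 by (metis mult_left_mono mult.right_neutral)
  ultimately have "(cmod u)^2 \<le> (cmod (of_int p * u + of_int q * v))^2" using s_def by linarith
  then show ?thesis by (rule power2_le_imp_le) simp
qed


lemma lat_gen_mem: "of_int p * u + of_int q * v \<in> lat_gen u v"
  unfolding lat_gen_def by blast

lemma minimal_basis_intro:
  assumes nuv: "cmod u = cmod v" and iuv: "\<bar>u \<bullet> v\<bar> \<le> (cmod u)^2 / 2"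
    and u0: "u \<noteq> 0" and li: "lin_indep2 u v"
  shows "minimal_basis (lat_gen u v) u v"
proof -
  have uin: "u \<in> lat_gen u v" using lat_gen_mem[of 1 u 0 v] by simp
  have vin: "v \<in> lat_gen u v" using lat_gen_mem[of 0 u 1 v] by simp
  have v0: "v \<noteq> 0" using nuv u0 by auto
  have mu: "\<forall>y\<in>lat_gen u v. y \<noteq> 0 \<longrightarrow> cmod u \<le> cmod y"
  proof (intro ballI impI)
    fix y assume "y \<in> lat_gen u v" "y \<noteq> 0"
    then obtain p q where y: "y = of_int p * u + of_int q * v" unfolding lat_gen_def by blast
    then have "(p,q) \<noteq> (0,0)" using \<open>y \<noteq> 0\<close> by auto
    then show "cmod u \<le> cmod y" using min_lemma[OF nuv iuv] y by blast
  qed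
  show ?thesis unfolding minimal_basis_def is_basis_def minimal_vec_def
    using li uin vin u0 v0 mu nuv by auto
qed

lemma triple_in_C_h_aux:
  assumes p: "primitive_eisenstein_triple (a,b,c)" and h: "2 * a \<le> b"
  shows "arccos (cos_ratio (a,b,c)) \<in> C_h"
proof -
  have ab: "a \<le> b" and c0: "c > 0" and b0: "b > 0"
    and eq: "int a ^ 2 - int a * int b + int b ^ 2 = int c ^ 2"
    using prim_basic[OF p] by auto
  define u :: complex where "u = of_int (int c) + of_int 0 * omega_h"
  define v :: complex where "v = of_int (int b - int a) + of_int (int b) * omega_h"
  have nu: "(cmod u)^2 = real c ^ 2" unfolding u_def lh_norm2 by simp
  have nv: "(cmod v)^2 = real c ^ 2" unfolding v_def lh_norm2
  proof -
    have "(int b - int a)\<^sup>2 - (int b - int a) * int b + (int b)\<^sup>2 = int c ^ 2"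
      using eq by (simp add: power2_eq_square algebra_simps)
    then show "real_of_int ((int b - int a)\<^sup>2 - (int b - int a) * int b + (int b)\<^sup>2) = real c ^ 2"
      by (metis of_int_of_nat_eq of_int_power)
  qed
  have cu: "cmod u = real c" using nu by (simp add: power2_eq_iff_nonneg)
  have cv: "cmod v = real c" using nv by (simp add: power2_eq_iff_nonneg)
  have iuv: "u \<bullet> v = real c * (real b - 2 * real a) / 2"
    unfolding u_def v_def lh_inner by (simp add: algebra_simps)
  have r: "cos_ratio (a,b,c) = (u \<bullet> v) / (cmod u * cmod v)"
    using h c0 unfolding iuv cu cv cos_ratio_def by (simp add: field_simps)
  have r0: "0 < cos_ratio (a,b,c)" and r1: "cos_ratio (a,b,c) \<le> 1/2" using prim_range[OF p] by auto
  have iuv2: "\<bar>u \<bullet> v\<bar> \<le> (cmod u)^2 / 2"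
  proof -
    have "u \<bullet> v = cos_ratio (a,b,c) * (cmod u)^2" using r cu cv c0 by (simp add: power2_eq_square)
    moreover have "cos_ratio (a,b,c) * (cmod u)^2 \<le> 1/2 * (cmod u)^2"
      using r1 by (intro mult_right_mono) auto
    moreover have "cos_ratio (a,b,c) * (cmod u)^2 \<ge> 0" using r0 by simp
    ultimately show ?thesis by simp
  qed
  have u0: "u \<noteq> 0" using cu c0 by auto
  have li: "lin_indep2 u v"
    unfolding lin_indep2_def
  proof (intro allI impI)
    fix r s :: real assume "r *\<^sub>R u + s *\<^sub>R v = 0"
    then have "Im (r *\<^sub>R u + s *\<^sub>R v) = 0" "Re (r *\<^sub>R u + s *\<^sub>R v) = 0" by auto
    then have "s * (real b * sqrt 3 / 2) = 0" and e2: "r * real c + s * (real b - real a - real b / 2) = 0"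
      unfolding u_def v_def by (simp_all add: omega_h_def)
    then have "s = 0" using b0 by simp
    then show "r = 0 \<and> s = 0" using e2 c0 by simp
  qed
  have mb: "minimal_basis (lat_gen u v) u v"
    by (rule minimal_basis_intro) (use cu cv iuv2 u0 li in auto)
  have sub: "lat_gen u v \<subseteq> Lambda_h"
  proof
    fix y assume "y \<in> lat_gen u v"
    then obtain p q where y: "y = of_int p * u + of_int q * v" unfolding lat_gen_def by blast
    have "y = of_int (p * int c + q * (int b - int a)) + of_int (q * int b) * omega_h"
      unfolding y u_def v_def by (simp add: algebra_simps)
    then show "y \<in> Lambda_h" unfolding Lambda_h_def by blast
  qed
  have w1: "well_rounded (lat_gen u v)" unfolding well_rounded_def using mb by blast
  have w2: "is_basis (lat_gen u v) u v" using mb unfolding minimal_basis_def by blast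
  have wr: "lat_gen u v \<in> WR_h"
    unfolding WR_h_def full_rank_sublattice_def using w1 w2 sub by blast
  have abs1: "\<bar>cos_ratio (a,b,c)\<bar> \<le> 1" using r0 r1 by simp
  have ang: "pi/3 \<le> arccos (cos_ratio (a,b,c)) \<and> arccos (cos_ratio (a,b,c)) \<le> pi/2"
  proof
    have "arccos (1/2) \<le> arccos (cos_ratio (a,b,c))" using r0 r1 by (intro arccos_le_arccos) auto
    then show "pi/3 \<le> arccos (cos_ratio (a,b,c))" by simp
    have "arccos (cos_ratio (a,b,c)) \<le> arccos 0" using r0 r1 by (intro arccos_le_arccos) auto
    then show "arccos (cos_ratio (a,b,c)) \<le> pi/2" by simp
  qed
  have "WR_angle (lat_gen u v) (arccos (cos_ratio (a,b,c)))"
    unfolding WR_angle_def vec_angle_def using ang mb r by auto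
  then show ?thesis unfolding C_h_def using wr by blast
qed

lemma triple_in_C_h:
  assumes p: "primitive_eisenstein_triple (a,b,c)"
  shows "arccos (cos_ratio (a,b,c)) \<in> C_h"
proof (cases "2 * a \<le> b")
  case True then show ?thesis using triple_in_C_h_aux[OF p] by blast
next
  case False
  have "2 * (b - a) \<le> b" using False by simp
  then show ?thesis using triple_in_C_h_aux[OF prim_swap(1)[OF p]] prim_swap(2)[OF p] by simp
qed


lemma int_triple_prim:
  fixes A B k N :: int
  assumes h1: "B - 2*A = k" and k0: "0 \<le> k" and kN: "k \<le> N" and B0: "0 \<le> B"
    and e: "4*N^2 = k^2 + 3*B^2" and N0: "0 < N"
  shows "\<exists>t. primitive_eisenstein_triple t \<and> cos_ratio t = real_of_int k / (2 * real_of_int N)"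
proof -
  have "k^2 \<le> N^2" using k0 kN by (intro power_mono) auto
  then have "k^2 \<le> B^2" using e by linarith
  then have "\<bar>k\<bar> \<le> \<bar>B\<bar>" by (simp add: abs_le_square_iff)
  then have kB: "k \<le> B" using k0 B0 by simp
  have A0: "0 \<le> A" using h1 kB by linarith
  have AB: "A \<le> B" using h1 k0 A0 by linarith
  have "4 * (A^2 - A*B + B^2) = (B - 2*A)^2 + 3*B^2" by (simp add: power2_eq_square algebra_simps)
  also have "\<dots> = 4*N^2" using h1 e by simp
  finally have eqA: "A^2 - A*B + B^2 = N^2" by simp
  have ia: "int (nat A) = A" "int (nat B) = B" "int (nat N) = N" using A0 B0 N0 by auto
  have "int (nat A) ^ 2 - int (nat A) * int (nat B) + int (nat B) ^ 2 = int (nat N) ^ 2"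
    unfolding ia by (rule eqA)
  moreover have "nat A \<le> nat B" using AB by simp
  moreover have "nat N > 0" using N0 by simp
  ultimately obtain t where t: "primitive_eisenstein_triple t"
    "cos_ratio t = cos_ratio (nat A, nat B, nat N)"
    using prim_exists by blast
  have "real (nat B) - 2 * real (nat A) = real_of_int k"
  proof -
    have "real (nat B) - 2 * real (nat A) = real_of_int (int (nat B) - 2 * int (nat A))" by simp
    also have "\<dots> = real_of_int k" unfolding ia h1 ..
    finally show ?thesis .
  qed
  moreover have "real (nat N) = real_of_int N"
  proof -
    have "real (nat N) = real_of_int (int (nat N))" by simp
    also have "\<dots> = real_of_int N" unfolding ia ..
    finally show ?thesis .
  qed
  ultimately have "cos_ratio (nat A, nat B, nat N) = real_of_int k / (2 * real_of_int N)"
    using k0 by (simp add: cos_ratio_def)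
  then have "cos_ratio t = real_of_int k / (2 * real_of_int N)" using t(2) by simp
  with t(1) show ?thesis by blast
qed

lemma C_h_range:
  assumes "\<theta> \<in> C_h" shows "pi/3 \<le> \<theta>" "\<theta> \<le> pi/2"
  using assms unfolding C_h_def WR_angle_def by auto

lemma C_h_triple:
  assumes th: "\<theta> \<in> C_h"
  shows "\<exists>t. primitive_eisenstein_triple t \<and> cos \<theta> = cos_ratio t"
proof -
  obtain \<Gamma> u v where G: "\<Gamma> \<in> WR_h" and mb: "minimal_basis \<Gamma> u v"
    and ang: "vec_angle u v = \<theta>" and t1: "pi/3 \<le> \<theta>" and t2: "\<theta> \<le> pi/2"
    using th unfolding C_h_def WR_angle_def by blast
  have sub: "\<Gamma> \<subseteq> Lambda_h" using G unfolding WR_h_def full_rank_sublattice_def by blast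
  have mu: "minimal_vec \<Gamma> u" and mv: "minimal_vec \<Gamma> v" using mb unfolding minimal_basis_def by auto
  have uG: "u \<in> \<Gamma>" "u \<noteq> 0" and vG: "v \<in> \<Gamma>" "v \<noteq> 0" using mu mv unfolding minimal_vec_def by auto
  have "cmod u \<le> cmod v" using mu vG unfolding minimal_vec_def by blast
  moreover have "cmod v \<le> cmod u" using mv uG unfolding minimal_vec_def by blast
  ultimately have nuv: "cmod u = cmod v" by simp
  obtain m1 n1 where u: "u = of_int m1 + of_int n1 * omega_h"
    using sub uG unfolding Lambda_h_def by blast
  obtain m2 n2 where v: "v = of_int m2 + of_int n2 * omega_h"
    using sub vG unfolding Lambda_h_def by blast
  define N1 where "N1 = m1^2 - m1*n1 + n1^2"
  define N2 where "N2 = m2^2 - m2*n2 + n2^2"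
  define k where "k = 2*m1*m2 + 2*n1*n2 - m1*n2 - m2*n1"
  define D where "D = m1*n2 - m2*n1"
  have nu: "(cmod u)^2 = real_of_int N1" unfolding u N1_def by (rule lh_norm2)
  have nv: "(cmod v)^2 = real_of_int N2" unfolding v N2_def by (rule lh_norm2)
  have "real_of_int N1 = real_of_int N2" using nu nv nuv by simp
  then have N12: "N1 = N2" by (simp only: of_int_eq_iff)
  have iuv: "u \<bullet> v = real_of_int k / 2" unfolding u v k_def by (rule lh_inner)
  have ident: "4 * N1 * N2 = k^2 + 3 * D^2"
    unfolding N1_def N2_def k_def D_def by (simp add: power2_eq_square algebra_simps)
  have "(cmod u)^2 > 0" using uG by simp
  then have Npos: "real_of_int N1 > 0" using nu by simp
  then have N0: "N1 > 0" by simp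
  have prod: "cmod u * cmod v = real_of_int N1" using nu nuv by (simp add: power2_eq_square)
  have cs: "\<bar>u \<bullet> v\<bar> \<le> cmod u * cmod v" by (rule Cauchy_Schwarz_ineq2)
  have q1: "\<bar>(u \<bullet> v) / (cmod u * cmod v)\<bar> \<le> 1"
    using cs Npos prod by (simp add: abs_div divide_le_eq_1)
  have cth: "cos \<theta> = (u \<bullet> v) / (cmod u * cmod v)"
    using ang q1 unfolding vec_angle_def by (auto intro: cos_arccos_abs)
  also have "\<dots> = real_of_int k / (2 * real_of_int N1)" unfolding iuv prod by simp
  finally have cth2: "cos \<theta> = real_of_int k / (2 * real_of_int N1)" .
  have "0 \<le> cos \<theta>" using t1 t2 by (intro cos_ge_zero) auto
  then have k0: "0 \<le> k" using cth2 Npos by (simp add: zero_le_divide_iff)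
  have "cos \<theta> \<le> cos (pi/3)" using t1 t2 by (intro cos_monotone_0_pi_le) auto
  then have "real_of_int k / (2 * real_of_int N1) \<le> 1/2" using cth2 cos_60 by simp
  then have "real_of_int k \<le> real_of_int N1" using Npos by (simp add: field_simps)
  then have kN: "k \<le> N1" by simp
  have e: "4 * N1^2 = k^2 + 3 * D^2" using ident N12 by (simp add: power2_eq_square)
  have "\<exists>t. primitive_eisenstein_triple t \<and> cos_ratio t = real_of_int k / (2 * real_of_int N1)"
  proof (cases "D \<ge> 0")
    case True
    have "D - 2 * (m1*n2 - m1*m2 - n1*n2) = k" unfolding D_def k_def by (simp add: algebra_simps)
    from int_triple_prim[OF this k0 kN True e N0] show ?thesis .
  next
    case False
    have h: "(-D) - 2 * (m2*n1 - m1*m2 - n1*n2) = k" unfolding D_def k_def by (simp add: algebra_simps)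
    have e': "4 * N1^2 = k^2 + 3 * (-D)^2" using e by simp
    have "0 \<le> -D" using False by simp
    from int_triple_prim[OF h k0 kN this e' N0] show ?thesis .
  qed
  then obtain t where "primitive_eisenstein_triple t" "cos_ratio t = real_of_int k / (2 * real_of_int N1)"
    by blast
  then show ?thesis using cth2 by (intro exI[of _ t]) simp
qed


theorem corollary4p6:
  shows "(\<forall>\<theta>\<in>C_h. \<exists>a b c.
            (a, b, c) \<noteq> (b - a, b, c) \<and>
            {t. primitive_eisenstein_triple t \<and> cos \<theta> = cos_ratio t} = {(a, b, c), (b - a, b, c)} \<and>
            cos \<theta> = \<bar>real b - 2 * real a\<bar> / (2 * real c) \<and>
            cos \<theta> = \<bar>real b - 2 * real (b - a)\<bar> / (2 * real c))
       \<and> (\<forall>t. primitive_eisenstein_triple t \<longrightarrow> (\<exists>!\<theta>. \<theta> \<in> C_h \<and> cos \<theta> = cos_ratio t))"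
proof (intro conjI ballI allI impI)
  fix \<theta> assume th: "\<theta> \<in> C_h"
  obtain t where t: "primitive_eisenstein_triple t" "cos \<theta> = cos_ratio t"
    using C_h_triple[OF th] by blast
  obtain a b c where abc: "t = (a,b,c)" by (cases t) auto
  have p: "primitive_eisenstein_triple (a,b,c)" using t abc by simp
  have ct: "cos \<theta> = cos_ratio (a,b,c)" using t abc by simp
  have ab: "a \<le> b" using prim_basic[OF p] by simp
  have "b \<noteq> 2 * a" by (rule prim_neq[OF p])
  then have ne: "(a, b, c) \<noteq> (b - a, b, c)" using ab by auto
  have ps: "primitive_eisenstein_triple (b-a,b,c)" and rs: "cos_ratio (b-a,b,c) = cos_ratio (a,b,c)"
    using prim_swap[OF p] by auto
  have S: "{t. primitive_eisenstein_triple t \<and> cos \<theta> = cos_ratio t} = {(a, b, c), (b - a, b, c)}"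
  proof (intro equalityI subsetI)
    fix s assume "s \<in> {t. primitive_eisenstein_triple t \<and> cos \<theta> = cos_ratio t}"
    then have s: "primitive_eisenstein_triple s" "cos \<theta> = cos_ratio s" by auto
    obtain a2 b2 c2 where s2: "s = (a2,b2,c2)" by (cases s) auto
    have "(a2,b2,c2) = (a,b,c) \<or> (a2,b2,c2) = (b-a,b,c)"
      using prim_uniq[OF p, of a2 b2 c2] s s2 ct by simp
    then show "s \<in> {(a, b, c), (b - a, b, c)}" using s2 by auto
  next
    fix s assume "s \<in> {(a, b, c), (b - a, b, c)}"
    then show "s \<in> {t. primitive_eisenstein_triple t \<and> cos \<theta> = cos_ratio t}"
      using p ps rs ct by auto
  qed
  have c1: "cos \<theta> = \<bar>real b - 2 * real a\<bar> / (2 * real c)" using ct by (simp add: cos_ratio_def)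
  have c2: "cos \<theta> = \<bar>real b - 2 * real (b - a)\<bar> / (2 * real c)"
  proof -
    have "cos \<theta> = cos_ratio (b-a,b,c)" using ct rs by simp
    then show ?thesis by (simp only: cos_ratio_def prod.case)
  qed
  show "\<exists>a b c.
            (a, b, c) \<noteq> (b - a, b, c) \<and>
            {t. primitive_eisenstein_triple t \<and> cos \<theta> = cos_ratio t} = {(a, b, c), (b - a, b, c)} \<and>
            cos \<theta> = \<bar>real b - 2 * real a\<bar> / (2 * real c) \<and>
            cos \<theta> = \<bar>real b - 2 * real (b - a)\<bar> / (2 * real c)"
    using ne S c1 c2 by blast
next
  fix t assume pt: "primitive_eisenstein_triple t"
  obtain a b c where abc: "t = (a,b,c)" by (cases t) auto
  have p: "primitive_eisenstein_triple (a,b,c)" using pt abc by simp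
  have r0: "0 < cos_ratio t" and r1: "cos_ratio t \<le> 1/2" using prim_range[OF p] abc by auto
  have inC: "arccos (cos_ratio t) \<in> C_h" using triple_in_C_h[OF p] abc by simp
  have cc: "cos (arccos (cos_ratio t)) = cos_ratio t" using r0 r1 by (intro cos_arccos) auto
  show "\<exists>!\<theta>. \<theta> \<in> C_h \<and> cos \<theta> = cos_ratio t"
  proof (rule ex1I[of _ "arccos (cos_ratio t)"])
    show "arccos (cos_ratio t) \<in> C_h \<and> cos (arccos (cos_ratio t)) = cos_ratio t" using inC cc by simp
  next
    fix \<theta> assume h: "\<theta> \<in> C_h \<and> cos \<theta> = cos_ratio t"
    have "pi/3 \<le> \<theta>" "\<theta> \<le> pi/2" using C_h_range h by auto
    moreover have "0 < pi" by (rule pi_gt_zero)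
    ultimately have "0 \<le> \<theta>" "\<theta> \<le> pi" by linarith+
    then have "arccos (cos \<theta>) = \<theta>" by (rule arccos_cos)
    then show "\<theta> = arccos (cos_ratio t)" using h by simp
  qed
qed

end
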